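(* Let $c(x,\bar y)=\frac{\langle x,y\rangle}{y_{n+1}}$ for $x\in\mathbb{R}^n$, $\bar y=(y,y_{n+1})\in\mathbb{S}^n_-$. (1) A subset $\Omega^*\subset\mathbb{S}^n_-$ is $c^*$-convex with respect to any $\Omega\subset\mathbb{R}^n$ if and only if it is a geodesically convex subset of $\mathbb{S}^n_-$. (2) A subset $\Omega\subset\mathbb{R}^n$ is $c$-convex with respect to any $\Omega^*\subset\mathbb{S}^n_-$ if and only if it is a convex subset of $\mathbb{R}^n$.
   Context: $\mathbb{S}^n_-=\{\bar y\in\mathbb{S}^n\mid y_{n+1}<0\}$. $\Omega^*$ is $c^*$-convex with respect to $\Omega$ if for every $x\in\Omega$ the set $-D_xc(x,\Omega^* )=\{-y/y_{n+1}\mid\bar y\in\Omega^*\}$ is a convex subset of $\mathbb{R}^n$. $\Omega$ is $c$-convex with respect to $\Omega^*$ if for every $\bar y\in\Omega^*$ the set $-D_{\bar y}c(\Omega,\bar y)$ is a convex subset of the tangent space $T_{\bar y}\mathbb{S}^n$. Geodesically convex means any two points of the set are joined by a minimizing great-circle arc lying in the set. *)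

theory Defs
  imports "HOL-Analysis.Analysis"
begin

text \<open>Points of R^n are of type real^'n; points of R^(n+1) are pairs (y, y_{n+1})
  of type (real^'n) \<times> real with the product inner product.\<close>

definition S_minus :: "((real^'n) \<times> real) set" where
  "S_minus = {yb. norm yb = 1 \<and> snd yb < 0}"

definition cost :: "real^'n \<Rightarrow> (real^'n) \<times> real \<Rightarrow> real" where
  "cost x yb = inner x (fst yb) / snd yb"

definition grad_of :: "('a::real_inner \<Rightarrow> real) \<Rightarrow> 'a \<Rightarrow> 'a" where
  "grad_of f x = (THE g. (f has_derivative (\<lambda>h. inner g h)) (at x))"

definition tang_proj :: "'a::real_inner \<Rightarrow> 'a \<Rightarrow> 'a" where
  "tang_proj yb v = v - inner v yb *\<^sub>R yb"

definition Dx_cost :: "real^'n \<Rightarrow> (real^'n) \<times> real \<Rightarrow> real^'n" where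
  "Dx_cost x yb = grad_of (\<lambda>z. cost z yb) x"

text \<open>D_yb c(x, yb): Riemannian gradient on the sphere, i.e. the tangential
  projection of the ambient gradient of the natural extension of c(x, .).\<close>
definition Dy_cost :: "real^'n \<Rightarrow> (real^'n) \<times> real \<Rightarrow> (real^'n) \<times> real" where
  "Dy_cost x yb = tang_proj yb (grad_of (\<lambda>zb. cost x zb) yb)"

definition c_star_convex :: "((real^'n) \<times> real) set \<Rightarrow> (real^'n) set \<Rightarrow> bool" where
  "c_star_convex Oms Om \<longleftrightarrow> (\<forall>x\<in>Om. convex ((\<lambda>yb. - Dx_cost x yb) ` Oms))"

definition c_convex :: "(real^'n) set \<Rightarrow> ((real^'n) \<times> real) set \<Rightarrow> bool" where
  "c_convex Om Oms \<longleftrightarrow> (\<forall>yb\<in>Oms. convex ((\<lambda>x. - Dy_cost x yb) ` Om))"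

definition min_gc_arc :: "'a::real_inner \<Rightarrow> 'a \<Rightarrow> 'a set \<Rightarrow> bool" where
  "min_gc_arc a b A \<longleftrightarrow>
     (\<exists>u \<theta>. norm u = 1 \<and> inner a u = 0 \<and> \<theta> = arccos (inner a b) \<and>
        b = cos \<theta> *\<^sub>R a + sin \<theta> *\<^sub>R u \<and>
        A = {cos t *\<^sub>R a + sin t *\<^sub>R u | t. 0 \<le> t \<and> t \<le> \<theta>})"

definition geod_convex :: "'a::real_inner set \<Rightarrow> bool" where
  "geod_convex S \<longleftrightarrow> S \<subseteq> sphere 0 1 \<and>
     (\<forall>a\<in>S. \<forall>b\<in>S. \<exists>A. min_gc_arc a b A \<and> A \<subseteq> S)"

end

theory Submission
  imports Defs
begin

definition phi :: "(real^'n) \<times> real \<Rightarrow> real^'n" where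
  "phi p = (-1 / snd p) *\<^sub>R fst p"

lemma grad_ofI:
  assumes "(f has_derivative (\<lambda>h. inner g h)) (at x)"
  shows "grad_of f x = g"
  unfolding grad_of_def
proof (rule the_equality)
  show "(f has_derivative (\<lambda>h. inner g h)) (at x)" by (rule assms)
  fix g' assume "(f has_derivative (\<lambda>h. inner g' h)) (at x)"
  from has_derivative_unique[OF this assms] have "\<And>h. inner g' h = inner g h" by metis
  hence "inner (g' - g) (g' - g) = 0" by (simp add: inner_diff_left)
  thus "g' = g" by simp
qed

lemma Dx_eq: "Dx_cost x yb = (1 / snd yb) *\<^sub>R fst yb"
proof -
  have "(\<lambda>z. cost z yb) = (\<lambda>z. inner ((1 / snd yb) *\<^sub>R fst yb) z)"
    by (auto simp: cost_def inner_commute divide_inverse)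
  moreover have "((\<lambda>z. inner ((1 / snd yb) *\<^sub>R fst yb) z) has_derivative (\<lambda>h. inner ((1 / snd yb) *\<^sub>R fst yb) h)) (at x)"
    by (rule bounded_linear_imp_has_derivative, rule bounded_linear_inner_right)
  ultimately show ?thesis unfolding Dx_cost_def by (simp add: grad_ofI)
qed

lemma Dy_eq:
  assumes "snd yb \<noteq> 0"
  shows "Dy_cost x yb = ((1 / snd yb) *\<^sub>R x, - inner x (fst yb) / (snd yb)^2)"
proof -
  obtain y s where yb: "yb = (y, s)" by (cases yb)
  have s: "s \<noteq> 0" using assms yb by simp
  let ?g = "((1 / s) *\<^sub>R x, - inner x y / s^2)"
  have "((\<lambda>zb. cost x zb) has_derivative (\<lambda>h. inner ?g h)) (at yb)"
    unfolding cost_def yb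
    apply (rule has_derivative_eq_rhs)
     apply (rule derivative_eq_intros | simp add: s)+
    apply (rule ext)
    apply (simp add: inner_prod_def field_simps power2_eq_square inner_commute)
    done
  hence "grad_of (\<lambda>zb. cost x zb) yb = ?g" by (rule grad_ofI)
  moreover have "inner ?g yb = 0" using s by (simp add: yb inner_prod_def field_simps power2_eq_square inner_commute)
  ultimately show ?thesis unfolding Dy_cost_def tang_proj_def using yb by simp
qed

lemma phi_inj:
  assumes p: "p \<in> S_minus" and q: "q \<in> S_minus" and e: "phi p = phi q"
  shows "p = q"
proof -
  obtain y s where py: "p = (y, s)" by (cases p)
  obtain z t where qz: "q = (z, t)" by (cases q)
  have s: "s < 0" "norm y ^ 2 + s^2 = 1" using p py by (auto simp: S_minus_def norm_Pair)
  have t: "t < 0" "norm z ^ 2 + t^2 = 1" using q qz by (auto simp: S_minus_def norm_Pair)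
  define f where "f = phi p"
  have yf: "y = (- s) *\<^sub>R f" using s by (simp add: f_def phi_def py)
  have zf: "z = (- t) *\<^sub>R f" using t e by (simp add: f_def phi_def qz)
  have "s^2 * (1 + norm f ^ 2) = 1" using s(2) yf by (simp add: power_mult_distrib algebra_simps)
  moreover have "t^2 * (1 + norm f ^ 2) = 1" using t(2) zf by (simp add: power_mult_distrib algebra_simps)
  ultimately have "s^2 = t^2" by (metis mult_right_cancel add_pos_nonneg zero_less_one zero_le_power2 less_irrefl)
  hence "s = t" using s t power2_eq_iff[of s t] by auto
  thus ?thesis using py qz yf zf by simp
qed

lemma phi_combo:
  assumes "snd a \<noteq> 0" "snd b \<noteq> 0" "l * snd a + m * snd b \<noteq> 0"
  shows "phi (l *\<^sub>R a + m *\<^sub>R b) = (1 - m * snd b / (l * snd a + m * snd b)) *\<^sub>R phi a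
           + (m * snd b / (l * snd a + m * snd b)) *\<^sub>R phi b"
proof -
  define d where "d = l * snd a + m * snd b"
  have d: "d \<noteq> 0" using assms(3) d_def by simp
  have c1: "(1 - m * snd b / d) * (-1 / snd a) = - l / d" using d assms(1) unfolding d_def by (simp add: field_simps)
  have c2: "(m * snd b / d) * (-1 / snd b) = - m / d" using d assms(2) by (simp add: field_simps)
  have "phi (l *\<^sub>R a + m *\<^sub>R b) = (-1 / d) *\<^sub>R (l *\<^sub>R fst a + m *\<^sub>R fst b)"
    by (simp add: phi_def d_def)
  also have "\<dots> = (- l / d) *\<^sub>R fst a + (- m / d) *\<^sub>R fst b"
    by (simp add: scaleR_add_right)
  also have "\<dots> = (1 - m * snd b / d) *\<^sub>R phi a + (m * snd b / d) *\<^sub>R phi b"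
    unfolding phi_def scaleR_scaleR c1 c2 ..
  finally show ?thesis unfolding d_def .
qed

lemma inner_bounds:
  assumes a: "a \<in> S_minus" and b: "b \<in> S_minus" and ab: "a \<noteq> b"
  shows "-1 < inner a b \<and> inner a b < 1"
proof -
  have na: "norm a = 1" and nb: "norm b = 1" and sa: "snd a < 0" and sb: "snd b < 0"
    using a b by (auto simp: S_minus_def)
  have aa: "inner a a = 1" using na by (simp add: norm_eq_sqrt_inner)
  have bb: "inner b b = 1" using nb by (simp add: norm_eq_sqrt_inner)
  have cs: "\<bar>inner a b\<bar> \<le> 1" using Cauchy_Schwarz_ineq2[of a b] na nb by simp
  have "inner (a - b) (a - b) = 2 - 2 * inner a b"
    using aa bb by (simp add: inner_diff_left inner_diff_right inner_commute)
  moreover have "inner (a - b) (a - b) \<noteq> 0" using ab by simp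
  ultimately have "inner a b \<noteq> 1" by auto
  moreover have "inner (a + b) (a + b) = 2 + 2 * inner a b"
    using aa bb by (simp add: inner_add_left inner_add_right inner_commute)
  moreover have "a + b \<noteq> 0"
  proof
    assume "a + b = 0"
    hence "snd a + snd b = 0" by (metis snd_add snd_zero)
    thus False using sa sb by simp
  qed
  hence "inner (a + b) (a + b) \<noteq> 0" by simp
  ultimately show ?thesis using cs by auto
qed

lemma arc_rep:
  fixes a b u :: "'a::real_vector"
  assumes "b = cos th *\<^sub>R a + sin th *\<^sub>R u" "sin th \<noteq> 0"
  shows "cos t *\<^sub>R a + sin t *\<^sub>R u = (sin (th - t) / sin th) *\<^sub>R a + (sin t / sin th) *\<^sub>R b"
proof -
  have u: "u = (1 / sin th) *\<^sub>R (b - cos th *\<^sub>R a)" using assms by simp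
  have c: "cos t - sin t * cos th / sin th = sin (th - t) / sin th"
    using assms(2) by (simp add: sin_diff field_simps)
  have "cos t *\<^sub>R a + sin t *\<^sub>R u = (cos t - sin t * cos th / sin th) *\<^sub>R a + (sin t / sin th) *\<^sub>R b"
    unfolding u by (simp add: algebra_simps scaleR_diff_right)
  thus ?thesis unfolding c .
qed

lemma unit_arc:
  assumes "norm a = 1" "norm u = 1" "inner a u = 0"
  shows "norm (cos t *\<^sub>R a + sin t *\<^sub>R u) = 1"
proof -
  have aa: "inner a a = 1" using assms by (simp add: norm_eq_sqrt_inner)
  have uu: "inner u u = 1" using assms by (simp add: norm_eq_sqrt_inner)
  have "inner (cos t *\<^sub>R a + sin t *\<^sub>R u) (cos t *\<^sub>R a + sin t *\<^sub>R u) = (cos t)^2 + (sin t)^2"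
    using aa uu assms(3) by (simp add: inner_add_left inner_add_right inner_commute power2_eq_square)
  thus ?thesis by (simp add: norm_eq_sqrt_inner)
qed

lemma geod_to_convex:
  assumes sub: "Oms \<subseteq> S_minus" and g: "geod_convex Oms"
  shows "convex (phi ` Oms)"
  unfolding convex_alt
proof (intro ballI allI impI)
  fix x y and r :: real
  assume x: "x \<in> phi ` Oms" and y: "y \<in> phi ` Oms" and r: "0 \<le> r \<and> r \<le> 1"
  then obtain a b where a: "a \<in> Oms" and b: "b \<in> Oms" and xa: "x = phi a" and yb: "y = phi b" by auto
  show "(1 - r) *\<^sub>R x + r *\<^sub>R y \<in> phi ` Oms"
  proof (cases "a = b")
    case True
    then show ?thesis using a xa yb by (simp add: scaleR_diff_left[symmetric] algebra_simps)
  next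
    case False
    have aS: "a \<in> S_minus" and bS: "b \<in> S_minus" using a b sub by auto
    have sa: "snd a < 0" and sb: "snd b < 0" using aS bS by (auto simp: S_minus_def)
    from inner_bounds[OF aS bS False] have c: "-1 < inner a b" "inner a b < 1" by auto
    obtain A where mA: "min_gc_arc a b A" and AO: "A \<subseteq> Oms" using g a b unfolding geod_convex_def by blast
    then obtain u th where th: "th = arccos (inner a b)" and bu: "b = cos th *\<^sub>R a + sin th *\<^sub>R u"
      and Aeq: "A = {cos t *\<^sub>R a + sin t *\<^sub>R u | t. 0 \<le> t \<and> t \<le> th}"
      unfolding min_gc_arc_def by blast
    have "(inner a b)^2 < 1" using c by (simp add: abs_less_iff abs_square_less_1)
    hence sth: "sin th > 0" using th c by (simp add: sin_arccos)
    have th0: "0 \<le> th" using th c by (simp add: arccos_lbound)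
    define p where "p t = (sin (th - t) / sin th) *\<^sub>R a + (sin t / sin th) *\<^sub>R b" for t
    have pin: "p t \<in> Oms" if "0 \<le> t" "t \<le> th" for t
    proof -
      have "cos t *\<^sub>R a + sin t *\<^sub>R u \<in> A" using that Aeq by blast
      thus ?thesis using arc_rep[OF bu, of t] sth AO unfolding p_def by auto
    qed
    have sp: "snd (p t) < 0" if "0 \<le> t" "t \<le> th" for t
      using pin[OF that] sub by (auto simp: S_minus_def)
    have sp': "snd (p t) = sin (th - t) / sin th * snd a + sin t / sin th * snd b" for t
      by (simp add: p_def)
    define w where "w t = sin t / sin th * snd b / (sin (th - t) / sin th * snd a + sin t / sin th * snd b)" for t
    have nz: "\<forall>t\<in>{0..th}. sin (th - t) / sin th * snd a + sin t / sin th * snd b \<noteq> 0"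
      using sp[unfolded sp'] by (metis atLeastAtMost_iff less_irrefl)
    have cw: "continuous_on {0..th} w"
      unfolding w_def
      apply (intro continuous_intros)
      using sth nz by auto
    have w0: "w 0 = 0" by (simp add: w_def)
    have w1: "w th = 1" using sth sb by (simp add: w_def)
    obtain t where t: "0 \<le> t" "t \<le> th" "w t = r" using IVT'[of w 0 r th] cw w0 w1 r th0 by auto
    have "phi (p t) = (1 - r) *\<^sub>R x + r *\<^sub>R y"
      unfolding p_def xa yb t(3)[symmetric] w_def
      apply (rule phi_combo)
      using sa sb sp[OF t(1,2)] sp' by auto
    moreover have "p t \<in> Oms" using pin t by auto
    ultimately show ?thesis by (metis image_eqI)
  qed
qed

lemma convex_to_geod:
  assumes sub: "Oms \<subseteq> S_minus" and cv: "convex (phi ` Oms)"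
  shows "geod_convex Oms"
  unfolding geod_convex_def
proof (intro conjI ballI)
  show "Oms \<subseteq> sphere 0 1" using sub by (auto simp: S_minus_def)
next
  fix a b assume a: "a \<in> Oms" and b: "b \<in> Oms"
  have aS: "a \<in> S_minus" and bS: "b \<in> S_minus" using a b sub by auto
  have sa: "snd a < 0" and sb: "snd b < 0" and na: "norm a = 1" and nb: "norm b = 1"
    using aS bS by (auto simp: S_minus_def)
  have aa: "inner a a = 1" using na by (simp add: norm_eq_sqrt_inner)
  have bb: "inner b b = 1" using nb by (simp add: norm_eq_sqrt_inner)
  show "\<exists>A. min_gc_arc a b A \<and> A \<subseteq> Oms"
  proof (cases "a = b")
    case True
    obtain y s where ys: "a = (y, s)" by (cases a)
    define e :: "real^'a" where "e = axis undefined 1"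
    define v where "v = (s *\<^sub>R e, - inner e y)"
    have "s \<noteq> 0" using sa ys by simp
    hence "v \<noteq> 0" by (simp add: v_def e_def zero_prod_def)
    hence nv: "norm v \<noteq> 0" by simp
    define u where "u = (1 / norm v) *\<^sub>R v"
    have nu: "norm u = 1" using nv by (simp add: u_def)
    have au: "inner a u = 0" by (simp add: u_def v_def ys inner_prod_def inner_commute)
    have Aeq: "{cos t *\<^sub>R a + sin t *\<^sub>R u | t. 0 \<le> t \<and> t \<le> (0::real)} = {a}"
    proof -
      have "{cos t *\<^sub>R a + sin t *\<^sub>R u | t. 0 \<le> t \<and> t \<le> (0::real)} = {cos t *\<^sub>R a + sin t *\<^sub>R u | t. t = 0}"
        by (metis order_antisym order_refl)
      thus ?thesis by simp
    qed
    have "min_gc_arc a b {a}"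
      unfolding min_gc_arc_def
      apply (rule exI[of _ u], rule exI[of _ 0])
      using nu au True aa Aeq by auto
    thus ?thesis using a by blast
  next
    case False
    from inner_bounds[OF aS bS False] have c: "-1 < inner a b" "inner a b < 1" by auto
    define c0 where "c0 = inner a b"
    define th where "th = arccos c0"
    have c02: "c0^2 < 1" using c by (simp add: c0_def abs_less_iff abs_square_less_1)
    hence sth: "sin th > 0" and sth2: "(sin th)^2 = 1 - c0^2" using c by (simp_all add: th_def c0_def sin_arccos)
    have cth: "cos th = c0" using c by (simp add: th_def c0_def)
    have thpi: "th \<le> pi" using c by (simp add: th_def c0_def arccos_ubound)
    define u where "u = (1 / sin th) *\<^sub>R (b - c0 *\<^sub>R a)"
    have "inner (b - c0 *\<^sub>R a) (b - c0 *\<^sub>R a) = 1 - c0^2"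
      using aa bb by (simp add: c0_def inner_diff_left inner_diff_right inner_commute power2_eq_square)
    hence "inner u u = 1" using sth sth2 c02 by (simp add: u_def power2_eq_square)
    hence nu: "norm u = 1" by (simp add: norm_eq_sqrt_inner)
    have au: "inner a u = 0" using aa by (simp add: u_def c0_def inner_diff_right)
    have bu: "b = cos th *\<^sub>R a + sin th *\<^sub>R u" using sth by (simp add: u_def cth)
    define A where "A = {cos t *\<^sub>R a + sin t *\<^sub>R u | t. 0 \<le> t \<and> t \<le> th}"
    have "min_gc_arc a b A"
      unfolding min_gc_arc_def A_def using nu au bu th_def c0_def by blast
    moreover have "A \<subseteq> Oms"
    proof
      fix p assume "p \<in> A"
      then obtain t where t: "0 \<le> t" "t \<le> th" and p: "p = cos t *\<^sub>R a + sin t *\<^sub>R u"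
        unfolding A_def by blast
      define l where "l = sin (th - t) / sin th"
      define m where "m = sin t / sin th"
      have pl: "p = l *\<^sub>R a + m *\<^sub>R b" using arc_rep[OF bu, of t] sth p l_def m_def by simp
      have l0: "l \<ge> 0" using t thpi sth by (simp add: l_def sin_ge_zero)
      have m0: "m \<ge> 0" using t thpi sth by (simp add: m_def sin_ge_zero)
      have np: "norm p = 1" using unit_arc[OF na nu au] p by simp
      have la: "l * snd a \<le> 0" using l0 sa by (simp add: mult_nonneg_nonpos)
      have mb: "m * snd b \<le> 0" using m0 sb by (simp add: mult_nonneg_nonpos)
      have spe: "snd p = l * snd a + m * snd b" using pl by simp
      have spn: "snd p < 0"
      proof (rule ccontr)
        assume "\<not> snd p < 0"
        hence "l * snd a = 0" "m * snd b = 0" using la mb spe by linarith+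
        hence "l = 0" "m = 0" using sa sb by auto
        hence "p = 0" using pl by simp
        thus False using np by simp
      qed
      have pS: "p \<in> S_minus" using np spn by (simp add: S_minus_def)
      define w where "w = m * snd b / (l * snd a + m * snd b)"
      have w0: "0 \<le> w" using mb spn spe by (simp add: w_def divide_nonpos_neg)
      have w1: "w \<le> 1" using la mb spn spe by (simp add: w_def divide_le_eq)
      have "phi p = (1 - w) *\<^sub>R phi a + w *\<^sub>R phi b"
        unfolding pl w_def by (rule phi_combo) (use sa sb spn spe in auto)
      also have "\<dots> \<in> phi ` Oms"
        using cv a b w0 w1 unfolding convex_alt by blast
      finally obtain q where q: "q \<in> Oms" "phi p = phi q" by auto
      hence "p = q" using phi_inj[OF pS, of q] sub by blast
      thus "p \<in> Oms" using q by simp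
    qed
    ultimately show ?thesis by blast
  qed
qed

lemma part2_aux:
  assumes s: "snd yb \<noteq> 0"
  shows "convex ((\<lambda>x. - Dy_cost x yb) ` Om) \<longleftrightarrow> convex Om"
proof -
  define L where "L x = ((-1 / snd yb) *\<^sub>R x, inner x (fst yb) / (snd yb)^2)" for x :: "real^'a"
  have eq: "(\<lambda>x. - Dy_cost x yb) = L"
    by (rule ext) (simp add: Dy_eq[OF s] L_def)
  have lin: "linear L"
    unfolding L_def by (rule linearI) (auto simp: inner_add_left algebra_simps add_divide_distrib)
  have inj: "inj L"
    by (rule injI) (use s in \<open>auto simp: L_def\<close>)
  have "L -` (L ` Om) = Om" using inj by (simp add: inj_vimage_image_eq)
  thus ?thesis unfolding eq
    using convex_linear_image[OF lin, of Om] convex_linear_vimage[OF lin, of "L ` Om"] by auto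
qed

theorem proposition4p6:
  shows "(\<forall>(Oms :: ((real^'n) \<times> real) set) (Om :: (real^'n) set).
            Oms \<subseteq> S_minus \<and> Om \<noteq> {} \<longrightarrow> (c_star_convex Oms Om \<longleftrightarrow> geod_convex Oms))
       \<and> (\<forall>(Om :: (real^'n) set) (Oms :: ((real^'n) \<times> real) set).
            Oms \<subseteq> S_minus \<and> Oms \<noteq> {} \<longrightarrow> (c_convex Om Oms \<longleftrightarrow> convex Om))"
proof (intro conjI allI impI)
  fix Oms :: "((real^'n) \<times> real) set" and Om :: "(real^'n) set"
  assume h: "Oms \<subseteq> S_minus \<and> Om \<noteq> {}"
  have eq: "(\<lambda>yb. - Dx_cost x yb) = phi" for x :: "real^'n"
    by (rule ext) (simp add: Dx_eq phi_def)
  have "c_star_convex Oms Om \<longleftrightarrow> convex (phi ` Oms)"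
    using h unfolding c_star_convex_def eq by auto
  also have "\<dots> \<longleftrightarrow> geod_convex Oms"
    using h geod_to_convex convex_to_geod by blast
  finally show "c_star_convex Oms Om \<longleftrightarrow> geod_convex Oms" .
next
  fix Oms :: "((real^'n) \<times> real) set" and Om :: "(real^'n) set"
  assume h: "Oms \<subseteq> S_minus \<and> Oms \<noteq> {}"
  then obtain yb where yb: "yb \<in> Oms" by auto
  have s: "snd z \<noteq> 0" if "z \<in> Oms" for z using h that by (auto simp: S_minus_def)
  show "c_convex Om Oms \<longleftrightarrow> convex Om"
    unfolding c_convex_def using part2_aux s yb by blast
qed

end
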